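(* Let $(\mathcal{P},+)$ be a reparametrization category, let $D_1,D_2$ be $\mathcal{P}$-spaces and $L\in\mathrm{Obj}(\mathcal{P})$. Then the mapping sending $(x,y)\in D_1(\ell_1)\times D_2(\ell_2)$ to the equivalence class of $(\mathrm{id}_L,x,y)$ yields a surjective continuous map \[\bigsqcup_{\substack{(\ell_1,\ell_2)\\ \ell_1+\ell_2=L}}D_1(\ell_1)\times D_2(\ell_2)\longrightarrow (D_1\otimes D_2)(L).\]
   Context: All enriched categories are enriched over the cartesian closed category $\mathbf{Top}$ of ($\Delta$-generated) topological spaces. A reparametrization category is a small enriched semimonoidal category $(\mathcal{P},\otimes)$ (hom-sets are spaces, composition and $\mathcal{P}(a,b)\times\mathcal{P}(c,d)\to\mathcal{P}(a\otimes c,b\otimes d)$ continuous) such that: (1) the semimonoidal structure is strict; (2) all spaces $\mathcal{P}(\ell,\ell')$ are contractible; (3) for every map $\phi:\ell\to\ell'$ and all objects $\ell'_1,\ell'_2$ with $\ell'_1\otimes\ell'_2=\ell'$, there exist maps $\phi_1:\ell_1\to\ell'_1$, $\phi_2:\ell_2\to\ell'_2$ with $\phi=\phi_1\otimes\phi_2$. One writes $\ell+\ell':=\ell\otimes\ell'$ on objects. A $\mathcal{P}$-space is an enriched functor $D:\mathcal{P}^{op}\to\mathbf{Top}$; for $\phi:\ell\to\ell'$ and $x\in D(\ell')$ write $x.\phi=D(\phi)(x)$. The tensor product of $\mathcal{P}$-spaces is $D_1\otimes D_2=\int^{(\ell_1,\ell_2)}\mathcal{P}(-,\ell_1+\ell_2)\times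 D_1(\ell_1)\times D_2(\ell_2)$; thus $(D_1\otimes D_2)(L)$ is a quotient of $\bigsqcup_{(\ell_1,\ell_2)}\mathcal{P}(L,\ell_1+\ell_2)\times D_1(\ell_1)\times D_2(\ell_2)$, its elements being equivalence classes of triples $(\psi,x,y)$. *)

theory Defs
  imports "HOL-Analysis.Analysis" "HOL-Homology.Simplices"
begin

definition simplex_top :: "nat \<Rightarrow> (nat \<Rightarrow> real) topology" where
  "simplex_top p = subtopology (powertop_real UNIV) (standard_simplex p)"

definition deltafy :: "'a topology \<Rightarrow> 'a topology" where
  "deltafy X = topology (\<lambda>U. U \<subseteq> topspace X \<and>
     (\<forall>p \<sigma>. continuous_map (simplex_top p) X \<sigma> \<longrightarrow>
        openin (simplex_top p) {t \<in> topspace (simplex_top p). \<sigma> t \<in> U}))"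

definition delta_generated :: "'a topology \<Rightarrow> bool" where
  "delta_generated X \<longleftrightarrow> deltafy X = X"

text \<open>Binary product in the category of Delta-generated spaces.\<close>
definition dprod :: "'a topology \<Rightarrow> 'b topology \<Rightarrow> ('a \<times> 'b) topology" where
  "dprod X Y = deltafy (prod_topology X Y)"

definition gen_equiv :: "'a set \<Rightarrow> ('a \<times> 'a) set \<Rightarrow> ('a \<times> 'a) set" where
  "gen_equiv S R = (R \<union> R\<inverse>)\<^sup>* \<inter> (S \<times> S)"

definition quotient_top :: "'a topology \<Rightarrow> ('a \<times> 'a) set \<Rightarrow> 'a set topology" where
  "quotient_top X r = topology (\<lambda>U. U \<subseteq> topspace X // r \<and> openin X (\<Union>U))"

text \<open>Morphisms live in type 'm, with domain src and codomain tgt;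
  T a b is the topology of the hom-space P(a,b) whose carrier is exactly
  the set of morphisms a -> b.  cmp g f is g composed after f.
  pl is the tensor on objects (written +), tens the tensor on morphisms.\<close>

definition hom :: "('m \<Rightarrow> 'o) \<Rightarrow> ('m \<Rightarrow> 'o) \<Rightarrow> 'o \<Rightarrow> 'o \<Rightarrow> 'm set" where
  "hom src tgt a b = {f. src f = a \<and> tgt f = b}"

definition reparam_cat ::
  "('m \<Rightarrow> 'o) \<Rightarrow> ('m \<Rightarrow> 'o) \<Rightarrow> ('o \<Rightarrow> 'o \<Rightarrow> 'm topology) \<Rightarrow> ('o \<Rightarrow> 'm) \<Rightarrow>
   ('m \<Rightarrow> 'm \<Rightarrow> 'm) \<Rightarrow> ('o \<Rightarrow> 'o \<Rightarrow> 'o) \<Rightarrow> ('m \<Rightarrow> 'm \<Rightarrow> 'm) \<Rightarrow> bool" where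
  "reparam_cat src tgt T idm cmp pl tens \<longleftrightarrow>
    \<comment> \<open>enriched category\<close>
    (\<forall>a b. topspace (T a b) = hom src tgt a b \<and> delta_generated (T a b)) \<and>
    (\<forall>a. idm a \<in> hom src tgt a a) \<and>
    (\<forall>a b c f g. f \<in> hom src tgt a b \<and> g \<in> hom src tgt b c \<longrightarrow> cmp g f \<in> hom src tgt a c) \<and>
    (\<forall>a b f. f \<in> hom src tgt a b \<longrightarrow> cmp f (idm a) = f \<and> cmp (idm b) f = f) \<and>
    (\<forall>a b c d f g h. f \<in> hom src tgt a b \<and> g \<in> hom src tgt b c \<and> h \<in> hom src tgt c d \<longrightarrow>
        cmp h (cmp g f) = cmp (cmp h g) f) \<and>
    (\<forall>a b c. continuous_map (dprod (T b c) (T a b)) (T a c) (\<lambda>(g, f). cmp g f)) \<and>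
    \<comment> \<open>strict enriched semimonoidal structure\<close>
    (\<forall>a b c d f g. f \<in> hom src tgt a b \<and> g \<in> hom src tgt c d \<longrightarrow>
        tens f g \<in> hom src tgt (pl a c) (pl b d)) \<and>
    (\<forall>a c. tens (idm a) (idm c) = idm (pl a c)) \<and>
    (\<forall>a b c a' b' c' f g f' g'. f \<in> hom src tgt a b \<and> g \<in> hom src tgt b c \<and>
        f' \<in> hom src tgt a' b' \<and> g' \<in> hom src tgt b' c' \<longrightarrow>
        tens (cmp g f) (cmp g' f') = cmp (tens g g') (tens f f')) \<and>
    (\<forall>a b c d. continuous_map (dprod (T a b) (T c d)) (T (pl a c) (pl b d)) (\<lambda>(f, g). tens f g)) \<and>
    (\<forall>a b c. pl (pl a b) c = pl a (pl b c)) \<and>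
    (\<forall>f g h. tens (tens f g) h = tens f (tens g h)) \<and>
    \<comment> \<open>(2) contractible hom-spaces\<close>
    (\<forall>a b. topspace (T a b) \<noteq> {} \<and> contractible_space (T a b)) \<and>
    \<comment> \<open>(3) factorization\<close>
    (\<forall>l l' \<phi> l1' l2'. \<phi> \<in> hom src tgt l l' \<and> pl l1' l2' = l' \<longrightarrow>
        (\<exists>l1 l2 \<phi>1 \<phi>2. \<phi>1 \<in> hom src tgt l1 l1' \<and> \<phi>2 \<in> hom src tgt l2 l2' \<and> \<phi> = tens \<phi>1 \<phi>2))"

text \<open>A P-space: X l is the space D(l); act phi x is x.phi.\<close>
definition P_space ::
  "('m \<Rightarrow> 'o) \<Rightarrow> ('m \<Rightarrow> 'o) \<Rightarrow> ('o \<Rightarrow> 'o \<Rightarrow> 'm topology) \<Rightarrow> ('o \<Rightarrow> 'm) \<Rightarrow>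
   ('m \<Rightarrow> 'm \<Rightarrow> 'm) \<Rightarrow> ('o \<Rightarrow> 'x topology) \<Rightarrow> ('m \<Rightarrow> 'x \<Rightarrow> 'x) \<Rightarrow> bool" where
  "P_space src tgt T idm cmp X act \<longleftrightarrow>
    (\<forall>l. delta_generated (X l)) \<and>
    (\<forall>l l'. continuous_map (dprod (X l') (T l l')) (X l) (\<lambda>(x, \<phi>). act \<phi> x)) \<and>
    (\<forall>l x. x \<in> topspace (X l) \<longrightarrow> act (idm l) x = x) \<and>
    (\<forall>l l' l'' \<phi> \<psi> x. \<psi> \<in> hom src tgt l l' \<and> \<phi> \<in> hom src tgt l' l'' \<and> x \<in> topspace (X l'') \<longrightarrow>
        act \<psi> (act \<phi> x) = act (cmp \<phi> \<psi>) x)"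

definition tensor_pre ::
  "('o \<Rightarrow> 'o \<Rightarrow> 'm topology) \<Rightarrow> ('o \<Rightarrow> 'o \<Rightarrow> 'o) \<Rightarrow> ('o \<Rightarrow> 'x topology) \<Rightarrow> ('o \<Rightarrow> 'y topology) \<Rightarrow>
   'o \<Rightarrow> (('o \<times> 'o) \<times> ('m \<times> ('x \<times> 'y))) topology" where
  "tensor_pre T pl X1 X2 L =
     sum_topology (\<lambda>(l1, l2). dprod (T L (pl l1 l2)) (dprod (X1 l1) (X2 l2))) UNIV"

text \<open>Generating relation of the coend: (psi, x.alpha, y.beta) ~ ((alpha (x) beta) o psi, x, y).\<close>
definition tensor_rel ::
  "('m \<Rightarrow> 'o) \<Rightarrow> ('m \<Rightarrow> 'o) \<Rightarrow> ('m \<Rightarrow> 'm \<Rightarrow> 'm) \<Rightarrow> ('o \<Rightarrow> 'o \<Rightarrow> 'o) \<Rightarrow> ('m \<Rightarrow> 'm \<Rightarrow> 'm) \<Rightarrow>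
   ('o \<Rightarrow> 'x topology) \<Rightarrow> ('m \<Rightarrow> 'x \<Rightarrow> 'x) \<Rightarrow> ('o \<Rightarrow> 'y topology) \<Rightarrow> ('m \<Rightarrow> 'y \<Rightarrow> 'y) \<Rightarrow>
   'o \<Rightarrow> ((('o \<times> 'o) \<times> ('m \<times> ('x \<times> 'y))) \<times> (('o \<times> 'o) \<times> ('m \<times> ('x \<times> 'y)))) set" where
  "tensor_rel src tgt cmp pl tens X1 act1 X2 act2 L =
     {(((l1, l2), (\<psi>, (act1 \<alpha> x, act2 \<beta> y))), ((k1, k2), (cmp (tens \<alpha> \<beta>) \<psi>, (x, y)))) |
        l1 l2 k1 k2 \<alpha> \<beta> \<psi> x y.
        \<alpha> \<in> hom src tgt l1 k1 \<and> \<beta> \<in> hom src tgt l2 k2 \<and> \<psi> \<in> hom src tgt L (pl l1 l2) \<and>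
        x \<in> topspace (X1 k1) \<and> y \<in> topspace (X2 k2)}"

definition tensor_equiv where
  "tensor_equiv src tgt T cmp pl tens X1 act1 X2 act2 L =
     gen_equiv (topspace (tensor_pre T pl X1 X2 L)) (tensor_rel src tgt cmp pl tens X1 act1 X2 act2 L)"

definition tensor_space where
  "tensor_space src tgt T cmp pl tens X1 act1 X2 act2 L =
     quotient_top (tensor_pre T pl X1 X2 L) (tensor_equiv src tgt T cmp pl tens X1 act1 X2 act2 L)"

end

theory Submission
  imports Defs
begin

lemma istop_deltafy:
  "istopology (\<lambda>U. U \<subseteq> topspace X \<and>
     (\<forall>p \<sigma>. continuous_map (simplex_top p) X \<sigma> \<longrightarrow>
        openin (simplex_top p) {t \<in> topspace (simplex_top p). \<sigma> t \<in> U}))"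
  unfolding istopology_def
proof (rule conjI; intro allI impI)
  fix S T assume S: "S \<subseteq> topspace X \<and> (\<forall>p \<sigma>. continuous_map (simplex_top p) X \<sigma> \<longrightarrow>
        openin (simplex_top p) {t \<in> topspace (simplex_top p). \<sigma> t \<in> S})"
    and T: "T \<subseteq> topspace X \<and> (\<forall>p \<sigma>. continuous_map (simplex_top p) X \<sigma> \<longrightarrow>
        openin (simplex_top p) {t \<in> topspace (simplex_top p). \<sigma> t \<in> T})"
  show "S \<inter> T \<subseteq> topspace X \<and> (\<forall>p \<sigma>. continuous_map (simplex_top p) X \<sigma> \<longrightarrow>
        openin (simplex_top p) {t \<in> topspace (simplex_top p). \<sigma> t \<in> S \<inter> T})"
  proof (intro conjI allI impI)
    show "S \<inter> T \<subseteq> topspace X" using S by blast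
    fix p \<sigma> assume c: "continuous_map (simplex_top p) X \<sigma>"
    have "{t \<in> topspace (simplex_top p). \<sigma> t \<in> S \<inter> T} =
      {t \<in> topspace (simplex_top p). \<sigma> t \<in> S} \<inter> {t \<in> topspace (simplex_top p). \<sigma> t \<in> T}" by blast
    then show "openin (simplex_top p) {t \<in> topspace (simplex_top p). \<sigma> t \<in> S \<inter> T}"
      using S T c by (simp add: openin_Int)
  qed
next
  fix K assume K: "\<forall>U\<in>K. U \<subseteq> topspace X \<and> (\<forall>p \<sigma>. continuous_map (simplex_top p) X \<sigma> \<longrightarrow>
        openin (simplex_top p) {t \<in> topspace (simplex_top p). \<sigma> t \<in> U})"
  show "\<Union>K \<subseteq> topspace X \<and> (\<forall>p \<sigma>. continuous_map (simplex_top p) X \<sigma> \<longrightarrow>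
        openin (simplex_top p) {t \<in> topspace (simplex_top p). \<sigma> t \<in> \<Union>K})"
  proof (intro conjI allI impI)
    show "\<Union>K \<subseteq> topspace X" using K by blast
    fix p \<sigma> assume c: "continuous_map (simplex_top p) X \<sigma>"
    have "{t \<in> topspace (simplex_top p). \<sigma> t \<in> \<Union>K} =
      \<Union>((\<lambda>U. {t \<in> topspace (simplex_top p). \<sigma> t \<in> U}) ` K)" by blast
    then show "openin (simplex_top p) {t \<in> topspace (simplex_top p). \<sigma> t \<in> \<Union>K}"
      using K c by (auto intro!: openin_Union)
  qed
qed

lemma openin_deltafy:
  "openin (deltafy X) U \<longleftrightarrow> U \<subseteq> topspace X \<and>
     (\<forall>p \<sigma>. continuous_map (simplex_top p) X \<sigma> \<longrightarrow>
        openin (simplex_top p) {t \<in> topspace (simplex_top p). \<sigma> t \<in> U})"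
  unfolding deltafy_def topology_inverse'[OF istop_deltafy] by (rule refl)

lemma openin_deltafyI:
  assumes "openin X U" shows "openin (deltafy X) U"
  unfolding openin_deltafy
proof (intro conjI allI impI)
  show "U \<subseteq> topspace X" by (rule openin_subset[OF assms])
  fix p \<sigma> assume "continuous_map (simplex_top p) X \<sigma>"
  then show "openin (simplex_top p) {t \<in> topspace (simplex_top p). \<sigma> t \<in> U}"
    using assms by (rule openin_continuous_map_preimage)
qed

lemma topspace_deltafy [simp]: "topspace (deltafy X) = topspace X"
proof (rule subset_antisym)
  have "openin (deltafy X) (topspace (deltafy X))" by (rule openin_topspace)
  then show "topspace (deltafy X) \<subseteq> topspace X"
    unfolding openin_deltafy by (rule conjunct1)
  show "topspace X \<subseteq> topspace (deltafy X)"
    by (rule openin_subset[OF openin_deltafyI[OF openin_topspace]])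
qed

lemma continuous_map_from_deltafy_target:
  assumes "continuous_map Y (deltafy X) g" shows "continuous_map Y X g"
  unfolding continuous_map
proof (intro conjI allI impI)
  show "g ` topspace Y \<subseteq> topspace X"
    using continuous_map_image_subset_topspace[OF assms] by simp
  fix U assume "openin X U"
  then show "openin Y {x \<in> topspace Y. g x \<in> U}"
    by (intro openin_continuous_map_preimage[OF assms] openin_deltafyI)
qed

lemma continuous_map_simplex_deltafy:
  assumes "continuous_map (simplex_top p) X \<sigma>"
  shows "continuous_map (simplex_top p) (deltafy X) \<sigma>"
  unfolding continuous_map
proof (intro conjI allI impI)
  show "\<sigma> ` topspace (simplex_top p) \<subseteq> topspace (deltafy X)"
    using continuous_map_image_subset_topspace[OF assms] by simp
  fix U assume "openin (deltafy X) U"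
  then show "openin (simplex_top p) {x \<in> topspace (simplex_top p). \<sigma> x \<in> U}"
    using assms unfolding openin_deltafy by simp
qed

lemma deltafy_idem: "deltafy (deltafy X) = deltafy X"
proof -
  have e: "continuous_map (simplex_top p) (deltafy X) \<sigma> \<longleftrightarrow> continuous_map (simplex_top p) X \<sigma>" for p \<sigma>
    using continuous_map_from_deltafy_target continuous_map_simplex_deltafy by blast
  have "openin (deltafy (deltafy X)) U \<longleftrightarrow> openin (deltafy X) U" for U
    unfolding openin_deltafy[of "deltafy X"] topspace_deltafy e
    unfolding openin_deltafy[of X] by (rule refl)
  then show ?thesis unfolding topology_eq by blast
qed

lemma continuous_map_deltafy:
  assumes g: "continuous_map Y X g"
  shows "continuous_map (deltafy Y) (deltafy X) g"
  unfolding continuous_map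
proof (intro conjI allI impI)
  show "g ` topspace (deltafy Y) \<subseteq> topspace (deltafy X)"
    using continuous_map_image_subset_topspace[OF g] by simp
  fix U assume U: "openin (deltafy X) U"
  show "openin (deltafy Y) {x \<in> topspace (deltafy Y). g x \<in> U}"
    unfolding openin_deltafy
  proof (intro conjI allI impI)
    show "{x \<in> topspace (deltafy Y). g x \<in> U} \<subseteq> topspace Y" by simp
    fix p \<sigma> assume c: "continuous_map (simplex_top p) Y \<sigma>"
    have c2: "continuous_map (simplex_top p) X (g \<circ> \<sigma>)"
      using c g by (rule continuous_map_compose)
    have im: "\<sigma> ` topspace (simplex_top p) \<subseteq> topspace Y"
      by (rule continuous_map_image_subset_topspace[OF c])
    have "{t \<in> topspace (simplex_top p). \<sigma> t \<in> {x \<in> topspace (deltafy Y). g x \<in> U}}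
        = {t \<in> topspace (simplex_top p). (g \<circ> \<sigma>) t \<in> U}"
      using im by (simp add: image_subset_iff) blast
    moreover have "openin (simplex_top p) {t \<in> topspace (simplex_top p). (g \<circ> \<sigma>) t \<in> U}"
      using U c2 unfolding openin_deltafy by blast
    ultimately show "openin (simplex_top p) {t \<in> topspace (simplex_top p). \<sigma> t \<in> {x \<in> topspace (deltafy Y). g x \<in> U}}"
      by simp
  qed
qed

lemma equiv_gen_equiv: "equiv S (gen_equiv S R)"
proof -
  let ?E = "(R \<union> R\<inverse>)\<^sup>*"
  have sy: "sym ?E" by (rule sym_rtrancl[OF sym_Un_converse])
  have tr: "trans ?E" by (rule trans_rtrancl)
  show ?thesis unfolding gen_equiv_def equiv_def
  proof (intro conjI)
    show "refl_on S (?E \<inter> S \<times> S)" unfolding refl_on_def by blast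
    show "sym (?E \<inter> S \<times> S)" using sy unfolding sym_def by blast
    show "trans (?E \<inter> S \<times> S)" using tr unfolding trans_def by blast
  qed blast
qed

lemma istop_quotient:
  assumes "equiv (topspace X) r"
  shows "istopology (\<lambda>U. U \<subseteq> topspace X // r \<and> openin X (\<Union>U))"
  unfolding istopology_def
proof (rule conjI; intro allI impI)
  fix S T assume S: "S \<subseteq> topspace X // r \<and> openin X (\<Union>S)" and T: "T \<subseteq> topspace X // r \<and> openin X (\<Union>T)"
  have "\<Union>(S \<inter> T) = \<Union>S \<inter> \<Union>T"
  proof
    show "\<Union>S \<inter> \<Union>T \<subseteq> \<Union>(S \<inter> T)"
    proof
      fix x assume "x \<in> \<Union>S \<inter> \<Union>T"
      then obtain A B where AB: "A \<in> S" "B \<in> T" "x \<in> A" "x \<in> B" by blast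
      have "A \<in> topspace X // r" "B \<in> topspace X // r" using AB S T by blast+
      then have "A = B" using AB quotient_disj[OF assms] by blast
      then show "x \<in> \<Union>(S \<inter> T)" using AB by blast
    qed
  qed blast
  then show "S \<inter> T \<subseteq> topspace X // r \<and> openin X (\<Union>(S \<inter> T))"
    using S T by (simp add: openin_Int le_infI1)
next
  fix K assume K: "\<forall>U\<in>K. U \<subseteq> topspace X // r \<and> openin X (\<Union>U)"
  have "\<Union>(\<Union>K) = \<Union>(Union ` K)" by blast
  moreover have "openin X (\<Union>(Union ` K))" using K by (intro openin_Union) blast
  ultimately show "\<Union>K \<subseteq> topspace X // r \<and> openin X (\<Union>(\<Union>K))"
    using K by auto
qed

lemma openin_quotient_top:
  assumes "equiv (topspace X) r"
  shows "openin (quotient_top X r) U \<longleftrightarrow> U \<subseteq> topspace X // r \<and> openin X (\<Union>U)"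
  unfolding quotient_top_def topology_inverse'[OF istop_quotient[OF assms]] by (rule refl)

lemma topspace_quotient_top:
  assumes "equiv (topspace X) r"
  shows "topspace (quotient_top X r) = topspace X // r"
proof -
  have "openin (quotient_top X r) (topspace X // r)"
    unfolding openin_quotient_top[OF assms] Union_quotient[OF assms] by simp
  have "topspace (quotient_top X r) \<subseteq> topspace X // r"
    using openin_topspace[of "quotient_top X r"] unfolding openin_quotient_top[OF assms] by blast
  moreover have "topspace X // r \<subseteq> topspace (quotient_top X r)"
    using openin_subset[OF \<open>openin (quotient_top X r) (topspace X // r)\<close>] .
  ultimately show ?thesis by (rule subset_antisym)
qed

lemma continuous_quotient:
  assumes e: "equiv (topspace X) r"
  shows "continuous_map X (quotient_top X r) (\<lambda>p. r``{p})"
  unfolding continuous_map_def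
proof (intro conjI allI impI)
  show "(\<lambda>p. r `` {p}) \<in> topspace X \<rightarrow> topspace (quotient_top X r)"
    unfolding topspace_quotient_top[OF e] by (auto intro: quotientI)
  fix U assume U: "openin (quotient_top X r) U"
  then have U1: "U \<subseteq> topspace X // r" and U2: "openin X (\<Union>U)"
    unfolding openin_quotient_top[OF e] by auto
  have "{p \<in> topspace X. r `` {p} \<in> U} = \<Union>U"
  proof
    show "{p \<in> topspace X. r `` {p} \<in> U} \<subseteq> \<Union>U"
    proof
      fix p assume "p \<in> {p \<in> topspace X. r `` {p} \<in> U}"
      moreover then have "p \<in> r``{p}" using e by (auto simp: equiv_def refl_on_def)
      ultimately show "p \<in> \<Union>U" by blast
    qed
    show "\<Union>U \<subseteq> {p \<in> topspace X. r `` {p} \<in> U}"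
    proof
      fix p assume "p \<in> \<Union>U"
      then obtain C where C: "C \<in> U" "p \<in> C" by blast
      then obtain a where a: "a \<in> topspace X" "C = r``{a}" using U1 by (auto elim: quotientE)
      then have "(a, p) \<in> r" using C by blast
      then have "r``{p} = r``{a}" "p \<in> topspace X" using equiv_class_eq_iff[OF e, of a p] by simp_all
      then show "p \<in> {p \<in> topspace X. r `` {p} \<in> U}" using a C by simp
    qed
  qed
  then show "openin X {p \<in> topspace X. r `` {p} \<in> U}" using U2 by simp
qed

lemma continuous_map_sum_out:
  assumes "\<And>i. i \<in> I \<Longrightarrow> continuous_map (X i) Y (\<lambda>x. g (i, x))"
  shows "continuous_map (sum_topology X I) Y g"
  unfolding continuous_map_def
proof (intro conjI allI impI)
  show "g \<in> topspace (sum_topology X I) \<rightarrow> topspace Y"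
  proof
    fix z assume "z \<in> topspace (sum_topology X I)"
    then obtain i x where z: "z = (i, x)" "i \<in> I" "x \<in> topspace (X i)" by auto
    show "g z \<in> topspace Y"
      using continuous_map_funspace[OF assms[OF z(2)]] z by auto
  qed
  fix U assume U: "openin Y U"
  show "openin (sum_topology X I) {x \<in> topspace (sum_topology X I). g x \<in> U}"
    unfolding openin_sum_topology
  proof (intro conjI ballI)
    fix i assume i: "i \<in> I"
    have "{x. (i, x) \<in> {x \<in> topspace (sum_topology X I). g x \<in> U}} = {x \<in> topspace (X i). g (i,x) \<in> U}"
      using i by auto
    then show "openin (X i) {x. (i, x) \<in> {x \<in> topspace (sum_topology X I). g x \<in> U}}"
      using assms[OF i] U by (simp add: openin_continuous_map_preimage)
  qed auto
qed

lemma continuous_pair_const_dprod: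
  assumes "c \<in> topspace C"
  shows "continuous_map (dprod A B) (dprod C (dprod A B)) (\<lambda>w. (c, w))"
proof -
  have "continuous_map (deltafy (prod_topology A B)) (prod_topology C (deltafy (prod_topology A B))) (\<lambda>w. (c, w))"
    using assms by (intro continuous_map_pairedI) auto
  then have "continuous_map (deltafy (deltafy (prod_topology A B))) (deltafy (prod_topology C (deltafy (prod_topology A B)))) (\<lambda>w. (c, w))"
    by (rule continuous_map_deltafy)
  then show ?thesis unfolding dprod_def deltafy_idem .
qed


theorem proposition3p3:
  fixes src tgt :: "'m \<Rightarrow> 'o" and T :: "'o \<Rightarrow> 'o \<Rightarrow> 'm topology" and idm :: "'o \<Rightarrow> 'm"
    and cmp :: "'m \<Rightarrow> 'm \<Rightarrow> 'm" and pl :: "'o \<Rightarrow> 'o \<Rightarrow> 'o" and tens :: "'m \<Rightarrow> 'm \<Rightarrow> 'm"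
    and X1 :: "'o \<Rightarrow> 'x topology" and act1 :: "'m \<Rightarrow> 'x \<Rightarrow> 'x"
    and X2 :: "'o \<Rightarrow> 'y topology" and act2 :: "'m \<Rightarrow> 'y \<Rightarrow> 'y"
    and L :: 'o
  assumes "reparam_cat src tgt T idm cmp pl tens"
    and "P_space src tgt T idm cmp X1 act1"
    and "P_space src tgt T idm cmp X2 act2"
  defines "f \<equiv> (\<lambda>((l1, l2), (x, y)).
      tensor_equiv src tgt T cmp pl tens X1 act1 X2 act2 L `` {((l1, l2), (idm L, (x, y)))})"
    and "S \<equiv> sum_topology (\<lambda>(l1, l2). dprod (X1 l1) (X2 l2)) {(l1, l2). pl l1 l2 = L}"
  shows "continuous_map S (tensor_space src tgt T cmp pl tens X1 act1 X2 act2 L) f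
    \<and> f ` topspace S = topspace (tensor_space src tgt T cmp pl tens X1 act1 X2 act2 L)"
proof -
  let ?P = "tensor_pre T pl X1 X2 L"
  let ?rel = "tensor_rel src tgt cmp pl tens X1 act1 X2 act2 L"
  let ?R = "tensor_equiv src tgt T cmp pl tens X1 act1 X2 act2 L"
  let ?Q = "tensor_space src tgt T cmp pl tens X1 act1 X2 act2 L"
  have RC: "reparam_cat src tgt T idm cmp pl tens" by (rule assms(1))
  have homT0: "\<forall>a b. topspace (T a b) = hom src tgt a b \<and> delta_generated (T a b)"
    using RC unfolding reparam_cat_def by (rule conjunct1)
  have homT: "\<And>a b. topspace (T a b) = hom src tgt a b"
    using homT0 by simp
  have idh: "\<And>a. idm a \<in> hom src tgt a a"
    using RC unfolding reparam_cat_def by (elim conjE) blast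
  have idl: "\<And>a b g. g \<in> hom src tgt a b \<Longrightarrow> cmp g (idm a) = g"
    using RC unfolding reparam_cat_def by (elim conjE) blast
  have tensh: "\<And>a b c d f g. f \<in> hom src tgt a b \<Longrightarrow> g \<in> hom src tgt c d \<Longrightarrow>
        tens f g \<in> hom src tgt (pl a c) (pl b d)"
    using RC[unfolded reparam_cat_def, THEN conjunct2, THEN conjunct2, THEN conjunct2, THEN conjunct2, THEN conjunct2, THEN conjunct2, THEN conjunct1] by blast
  have fact: "\<And>l l' \<phi> l1' l2'. \<phi> \<in> hom src tgt l l' \<Longrightarrow> pl l1' l2' = l' \<Longrightarrow>
        (\<exists>l1 l2 \<phi>1 \<phi>2. \<phi>1 \<in> hom src tgt l1 l1' \<and> \<phi>2 \<in> hom src tgt l2 l2' \<and> \<phi> = tens \<phi>1 \<phi>2)"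
    using RC[unfolded reparam_cat_def, THEN conjunct2, THEN conjunct2, THEN conjunct2, THEN conjunct2, THEN conjunct2, THEN conjunct2, THEN conjunct2, THEN conjunct2, THEN conjunct2, THEN conjunct2, THEN conjunct2, THEN conjunct2, THEN conjunct2] by blast
  have act1c: "\<And>l l'. continuous_map (dprod (X1 l') (T l l')) (X1 l) (\<lambda>(x, \<phi>). act1 \<phi> x)"
    using assms(2) unfolding P_space_def by (elim conjE) blast
  have act2c: "\<And>l l'. continuous_map (dprod (X2 l') (T l l')) (X2 l) (\<lambda>(x, \<phi>). act2 \<phi> x)"
    using assms(3) unfolding P_space_def by (elim conjE) blast
  have R_def: "?R = gen_equiv (topspace ?P) ?rel" unfolding tensor_equiv_def by (rule refl)
  have eq: "equiv (topspace ?P) ?R" unfolding R_def by (rule equiv_gen_equiv)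
  have Q_def: "?Q = quotient_top ?P ?R" unfolding tensor_space_def by (rule refl)
  have topQ: "topspace ?Q = topspace ?P // ?R" unfolding Q_def by (rule topspace_quotient_top[OF eq])
  have topP: "topspace ?P = (SIGMA i:UNIV. (case i of (l1, l2) \<Rightarrow> hom src tgt L (pl l1 l2) \<times> (topspace (X1 l1) \<times> topspace (X2 l2))))"
    unfolding tensor_pre_def dprod_def by (auto simp: homT)
  have topS: "topspace S = (SIGMA i:{(l1, l2). pl l1 l2 = L}. (case i of (l1, l2) \<Rightarrow> topspace (X1 l1) \<times> topspace (X2 l2)))"
    unfolding S_def dprod_def by auto
  define incl where "incl = (\<lambda>z::('o \<times> 'o) \<times> ('x \<times> 'y). (fst z, (idm L, snd z)))"
  have f_eq: "f = (\<lambda>p. ?R `` {p}) \<circ> incl"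
    unfolding f_def incl_def by (auto simp: fun_eq_iff)
  have incl_c: "continuous_map S ?P incl"
    unfolding S_def
  proof (rule continuous_map_sum_out)
    fix i assume i: "i \<in> {(l1, l2). pl l1 l2 = L}"
    obtain l1 l2 where i': "i = (l1, l2)" "pl l1 l2 = L" using i by auto
    have c1: "continuous_map (dprod (X1 l1) (X2 l2)) (dprod (T L (pl l1 l2)) (dprod (X1 l1) (X2 l2))) (\<lambda>w. (idm L, w))"
      by (rule continuous_pair_const_dprod) (simp add: homT i'(2) idh)
    have c2: "continuous_map (dprod (T L (pl l1 l2)) (dprod (X1 l1) (X2 l2))) ?P (\<lambda>w. ((l1, l2), w))"
      unfolding tensor_pre_def
      using continuous_map_component_injection[of "(l1, l2)" UNIV "\<lambda>(l1, l2). dprod (T L (pl l1 l2)) (dprod (X1 l1) (X2 l2))"]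
      by simp
    have "continuous_map (dprod (X1 l1) (X2 l2)) ?P ((\<lambda>w. ((l1, l2), w)) \<circ> (\<lambda>w. (idm L, w)))"
      using c1 c2 by (rule continuous_map_compose)
    then show "continuous_map ((\<lambda>(l1, l2). dprod (X1 l1) (X2 l2)) i) ?P (\<lambda>x. incl (i, x))"
      unfolding incl_def i'(1) by (simp add: o_def)
  qed
  have cont: "continuous_map S ?Q f"
    unfolding f_eq Q_def using incl_c continuous_quotient[OF eq] by (rule continuous_map_compose)
  have sub1: "f ` topspace S \<subseteq> topspace ?Q"
    using continuous_map_image_subset_topspace[OF cont] .
  have sub2: "topspace ?Q \<subseteq> f ` topspace S"
  proof
    fix C assume "C \<in> topspace ?Q"
    then obtain q where q: "q \<in> topspace ?P" "C = ?R `` {q}" unfolding topQ by (auto elim: quotientE)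
    then obtain l1 l2 \<psi> x y where qd: "q = ((l1, l2), (\<psi>, (x, y)))" "\<psi> \<in> hom src tgt L (pl l1 l2)"
      "x \<in> topspace (X1 l1)" "y \<in> topspace (X2 l2)"
      unfolding topP by auto
    obtain m1 m2 \<psi>1 \<psi>2 where fa: "\<psi>1 \<in> hom src tgt m1 l1" "\<psi>2 \<in> hom src tgt m2 l2" "\<psi> = tens \<psi>1 \<psi>2"
      using fact[OF qd(2) refl] by blast
    have "tens \<psi>1 \<psi>2 \<in> hom src tgt (pl m1 m2) (pl l1 l2)" using tensh fa by blast
    then have m: "pl m1 m2 = L" using qd(2) fa(3) unfolding hom_def by simp
    have x': "act1 \<psi>1 x \<in> topspace (X1 m1)"
      using continuous_map_funspace[OF act1c[of l1 m1]] qd(3) fa(1) homT unfolding dprod_def by force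
    have y': "act2 \<psi>2 y \<in> topspace (X2 m2)"
      using continuous_map_funspace[OF act2c[of l2 m2]] qd(4) fa(2) homT unfolding dprod_def by force
    define p where "p = ((m1, m2), (idm L, (act1 \<psi>1 x, act2 \<psi>2 y)))"
    have cm: "cmp (tens \<psi>1 \<psi>2) (idm L) = \<psi>" using idl qd(2) fa(3) by blast
    have "(p, q) \<in> ?rel"
      unfolding tensor_rel_def p_def qd(1) mem_Collect_eq
      apply (rule exI[of _ m1], rule exI[of _ m2], rule exI[of _ l1], rule exI[of _ l2],
        rule exI[of _ \<psi>1], rule exI[of _ \<psi>2], rule exI[of _ "idm L"], rule exI[of _ x], rule exI[of _ y])
      using fa qd idh[of L] m cm by simp
    moreover have "p \<in> topspace ?P" unfolding topP p_def using x' y' m idh[of L] by simp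
    ultimately have "(p, q) \<in> ?R" using q(1) unfolding R_def gen_equiv_def by blast
    then have "?R `` {p} = ?R `` {q}" using equiv_class_eq_iff[OF eq] by blast
    moreover have "((m1, m2), (act1 \<psi>1 x, act2 \<psi>2 y)) \<in> topspace S"
      unfolding topS using x' y' m by simp
    moreover have "f ((m1, m2), (act1 \<psi>1 x, act2 \<psi>2 y)) = ?R `` {p}"
      unfolding f_def p_def by simp
    ultimately show "C \<in> f ` topspace S" using q(2) by (metis image_eqI)
  qed
  show ?thesis using cont sub1 sub2 by blast
qed

end
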